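(* Let $\rho\in(0,1)$ and $\sigma_x<\sigma_y$. For every $\mathbf a=(x_1,y_1)\in\mathbb R^2$ with $x_1^2+y_1^2>2x_2^{*2}$, $K(\mathbf a,\mathbf b^* )>0$.
   Context: Standing setup. Fix $\sigma_x,\sigma_y>0$ and $\rho\in(-1,1)$, and let $(\xi,\eta)$ be a bivariate normal random vector with mean $(0,0)$ and covariance matrix $\Sigma=\begin{pmatrix}\sigma_x^2&\rho\sigma_x\sigma_y\\ \rho\sigma_x\sigma_y&\sigma_y^2\end{pmatrix}$. Player I (the minimizer) chooses $\mathbf a=(x_1,y_1)\in\mathbb R^2$ and Player II (the maximizer) chooses $\mathbf b=(x_2,y_2)\in\mathbb R^2$. Let $C_1(\mathbf a,\mathbf b)=\{(x,y):(x_1-x)^2+(y_1-y)^2<(x_2-x)^2+(y_2-y)^2\}$ and $C_2(\mathbf a,\mathbf b)=\{(x,y):(x_1-x)^2+(y_1-y)^2>(x_2-x)^2+(y_2-y)^2\}$. The payoff to Player II (paid by Player I) is $K(\mathbf a,\mathbf b)=x_1+y_1$ if $\mathbf a=\mathbf b$, and $K(\mathbf a,\mathbf b)=(x_1+y_1)\,P((\xi,\eta)\in C_1(\mathbf a,\mathbf b))+(x_2+y_2)\,P((\xi,\eta)\in C_2(\mathbf a,\mathbf b))$ if $\mathbf a\neq\mathbf b$. For $\mathbf a=(x,y)$ write $-\mathbf a=(-x,-y)$. Let $x_2^*=\frac{\sqrt{2\pi(\sigma_x^2+2\rho\sigma_x\sigma_y+\sigma_y^2)}}{4}$, $\mathbf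 b^*=(x_2^*,x_2^* )$ and $\mathbf a^*=(-x_2^*,-x_2^* )$. *)

theory Defs
  imports "HOL-Probability.Probability"
begin

text \<open>Density of the centred bivariate normal distribution with standard deviations
  sx, sy and correlation r, i.e. covariance matrix
  [[sx^2, r sx sy], [r sx sy, sy^2]] (valid for sx, sy > 0 and -1 < r < 1).\<close>
definition bvn_density :: "real \<Rightarrow> real \<Rightarrow> real \<Rightarrow> real \<times> real \<Rightarrow> real" where
  "bvn_density sx sy r p =
     (let x = fst p; y = snd p in
      exp (- (x^2 / sx^2 - 2 * r * x * y / (sx * sy) + y^2 / sy^2) / (2 * (1 - r^2)))
      / (2 * pi * sx * sy * sqrt (1 - r^2)))"

definition bvn_measure :: "real \<Rightarrow> real \<Rightarrow> real \<Rightarrow> (real \<times> real) measure" where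
  "bvn_measure sx sy r = density lborel (\<lambda>p. ennreal (bvn_density sx sy r p))"

definition bvn_prob :: "real \<Rightarrow> real \<Rightarrow> real \<Rightarrow> (real \<times> real) set \<Rightarrow> real" where
  "bvn_prob sx sy r A = measure (bvn_measure sx sy r) A"

definition C1 :: "real \<times> real \<Rightarrow> real \<times> real \<Rightarrow> (real \<times> real) set" where
  "C1 a b = {(x, y). (fst a - x)^2 + (snd a - y)^2 < (fst b - x)^2 + (snd b - y)^2}"

definition C2 :: "real \<times> real \<Rightarrow> real \<times> real \<Rightarrow> (real \<times> real) set" where
  "C2 a b = {(x, y). (fst a - x)^2 + (snd a - y)^2 > (fst b - x)^2 + (snd b - y)^2}"

definition payoffK :: "real \<Rightarrow> real \<Rightarrow> real \<Rightarrow> real \<times> real \<Rightarrow> real \<times> real \<Rightarrow> real" where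
  "payoffK sx sy r a b =
     (if a = b then fst a + snd a
      else (fst a + snd a) * bvn_prob sx sy r (C1 a b)
         + (fst b + snd b) * bvn_prob sx sy r (C2 a b))"

definition x2star :: "real \<Rightarrow> real \<Rightarrow> real \<Rightarrow> real" where
  "x2star sx sy r = sqrt (2 * pi * (sx^2 + 2 * r * sx * sy + sy^2)) / 4"

end

theory Submission
  imports Defs
begin


definition Qn :: "real \<Rightarrow> ennreal" where
  "Qn t = (\<integral>\<^sup>+z. ennreal (std_normal_density z) * indicator {t<..} z \<partial>lborel)"

lemma std_total: "(\<integral>\<^sup>+z. ennreal (std_normal_density z) \<partial>lborel) = 1"
  by (subst nn_integral_eq_integral) auto

lemma std_sym: "std_normal_density (-z) = std_normal_density z"
  by (simp add: normal_density_def)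

lemma Qn_sym: "(\<integral>\<^sup>+z. ennreal (std_normal_density z) * indicator {..<-t} z \<partial>lborel) = Qn t"
proof -
  have "(\<integral>\<^sup>+z. ennreal (std_normal_density z) * indicator {..<-t} z \<partial>lborel)
      = (\<integral>\<^sup>+z. ennreal (std_normal_density (0 + -1 * z)) * indicator {..<-t} (0 + -1*z) \<partial>lborel)"
    using nn_integral_real_affine[of "\<lambda>z. ennreal (std_normal_density z) * indicator {..<-t} z" "-1" 0] by simp
  also have "\<dots> = Qn t" unfolding Qn_def
    by (intro nn_integral_cong) (auto simp: std_sym indicator_def)
  finally show ?thesis .
qed

lemma Qn_split: "Qn t + (\<integral>\<^sup>+z. ennreal (std_normal_density z) * indicator {..<t} z \<partial>lborel) = 1"
proof -
  have "Qn t + (\<integral>\<^sup>+z. ennreal (std_normal_density z) * indicator {..<t} z \<partial>lborel)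
     = (\<integral>\<^sup>+z. ennreal (std_normal_density z) * indicator {t<..} z + ennreal (std_normal_density z) * indicator {..<t} z \<partial>lborel)"
    unfolding Qn_def by (subst nn_integral_add) auto
  also have "\<dots> = (\<integral>\<^sup>+z. ennreal (std_normal_density z) \<partial>lborel)"
    apply (rule nn_integral_cong_AE)
    using AE_lborel_singleton[of t] by eventually_elim (auto simp: indicator_def)
  finally show ?thesis using std_total by simp
qed

lemma Qn0: "Qn 0 = ennreal (1/2)"
proof -
  have "Qn 0 + Qn 0 = 1" using Qn_split[of 0] Qn_sym[of 0] by simp
  moreover have "Qn 0 \<noteq> top" using \<open>Qn 0 + Qn 0 = 1\<close>
    by (metis ennreal_add_eq_top ennreal_one_neq_top)
  then obtain r where r: "Qn 0 = ennreal r" "0 \<le> r" by (cases "Qn 0") auto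
  ultimately have "ennreal (r + r) = ennreal 1" using r by (simp add: ennreal_plus[symmetric] del: ennreal_plus)
  then have "r = 1/2" using r by (subst (asm) ennreal_inj) auto
  then show ?thesis using r by (simp only:)
qed

lemma Qn_mono: "s \<le> t \<Longrightarrow> Qn t \<le> Qn s"
  unfolding Qn_def by (intro nn_integral_mono) (auto simp: indicator_def mult_le_cancel_left1)

lemma Qn_shift: "Qn t = (\<integral>\<^sup>+y. ennreal (std_normal_density (t + y)) * indicator {0<..} y \<partial>lborel)"
proof -
  have "Qn t = (\<integral>\<^sup>+y. ennreal (std_normal_density (t + 1 * y)) * indicator {t<..} (t + 1 * y) \<partial>lborel)"
    unfolding Qn_def using nn_integral_real_affine[of "\<lambda>z. ennreal (std_normal_density z) * indicator {t<..} z" 1 t] by simp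
  also have "\<dots> = (\<integral>\<^sup>+y. ennreal (std_normal_density (t + y)) * indicator {0<..} y \<partial>lborel)"
    by (intro nn_integral_cong) (auto simp: indicator_def)
  finally show ?thesis .
qed

lemma Qn_chernoff: assumes "0 \<le> t" shows "Qn t \<le> ennreal (exp (-t\<^sup>2/2) / 2)"
proof -
  have "Qn t \<le> (\<integral>\<^sup>+y. ennreal (exp (-t\<^sup>2/2)) * (ennreal (std_normal_density y) * indicator {0<..} y) \<partial>lborel)"
    unfolding Qn_shift
  proof (intro nn_integral_mono)
    fix y :: real
    show "ennreal (std_normal_density (t + y)) * indicator {0<..} y \<le> ennreal (exp (-t\<^sup>2/2)) * (ennreal (std_normal_density y) * indicator {0<..} y)"
    proof (cases "0 < y")
      case True
      have "-(t+y)\<^sup>2/2 \<le> -t\<^sup>2/2 + -y\<^sup>2/2" using True assms by (simp add: power2_eq_square field_simps)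
      then have "exp (-(t+y)\<^sup>2/2) \<le> exp (-t\<^sup>2/2) * exp (-y\<^sup>2/2)" by (simp add: exp_add[symmetric])
      then have "std_normal_density (t + y) \<le> exp (-t\<^sup>2/2) * std_normal_density y"
        by (simp add: std_normal_density_def divide_right_mono)
      then show ?thesis using True by (simp add: ennreal_mult[symmetric] ennreal_leI)
    qed simp
  qed
  also have "\<dots> = ennreal (exp (-t\<^sup>2/2)) * Qn 0"
    unfolding Qn_def by (subst nn_integral_cmult) auto
  also have "\<dots> = ennreal (exp (-t\<^sup>2/2)) * ennreal (1/2)" by (simp only: Qn0)
  also have "\<dots> = ennreal (exp (-t\<^sup>2/2) * (1/2))" by (rule ennreal_mult[symmetric]) auto
  also have "\<dots> = ennreal (exp (-t\<^sup>2/2) / 2)" by simp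
  finally show ?thesis .
qed

lemma poly_integral:
  assumes "0 \<le> t"
  shows "((\<lambda>z. (1 - z\<^sup>2/2)/sqrt(2*pi)) has_integral ((t - t^3/6)/sqrt(2*pi))) {0..t}"
proof -
  have der: "((\<lambda>z. (z - z^3/6)/sqrt(2*pi)) has_vector_derivative (1 - x\<^sup>2/2)/sqrt(2*pi)) (at x within {0..t})"
    if "x \<in> {0..t}" for x :: real
  proof -
    have d: "((\<lambda>z. z - z^3/6) has_real_derivative (1 - x\<^sup>2/2)) (at x within {0..t})"
      by (auto intro!: derivative_eq_intros simp: power2_eq_square)
    show ?thesis using DERIV_cdivide[OF d, of "sqrt(2*pi)"] by (simp add: has_real_derivative_iff_has_vector_derivative)
  qed
  have "((\<lambda>z. (1 - z\<^sup>2/2)/sqrt(2*pi)) has_integral ((\<lambda>z. (z - z^3/6)/sqrt(2*pi)) t - (\<lambda>z. (z - z^3/6)/sqrt(2*pi)) 0)) {0..t}"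
    by (rule fundamental_theorem_of_calculus[where f="\<lambda>z. (z - z^3/6)/sqrt(2*pi)" and f'="\<lambda>z. (1 - z\<^sup>2/2)/sqrt(2*pi)", OF assms der])
  then show ?thesis by simp
qed

lemma Qn_poly:
  assumes t: "0 \<le> t" "t\<^sup>2 \<le> 2"
  shows "enn2real (Qn t) \<le> 1/2 - (t - t^3/6)/sqrt(2*pi)"
proof -
  let ?I = "(\<integral>\<^sup>+z. ennreal (std_normal_density z) * indicator {0<..t} z \<partial>lborel)"
  have split: "Qn 0 = Qn t + ?I"
    unfolding Qn_def using t
    by (subst nn_integral_add[symmetric]) (auto intro!: nn_integral_cong simp: indicator_def)
  have ge: "ennreal ((t - t^3/6)/sqrt(2*pi)) \<le> ?I"
  proof -
    have "ennreal ((t - t^3/6)/sqrt(2*pi)) = (\<integral>\<^sup>+z. ennreal ((1 - z\<^sup>2/2)/sqrt(2*pi)) * indicator {0..t} z \<partial>lborel)"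
    proof (rule nn_integral_has_integral_lebesgue'[symmetric])
      show "((\<lambda>z. (1 - z\<^sup>2/2)/sqrt(2*pi)) has_integral ((t - t^3/6)/sqrt(2*pi))) {0..t}"
        using poly_integral t(1) .
      fix x :: real assume "x \<in> {0..t}"
      then have "x\<^sup>2 \<le> t\<^sup>2" by (auto intro!: power_mono)
      then show "0 \<le> (1 - x\<^sup>2/2)/sqrt(2*pi)" using t by simp
    qed
    also have "\<dots> \<le> ?I"
    proof (rule nn_integral_mono_AE)
      show "AE z in lborel. ennreal ((1 - z\<^sup>2/2)/sqrt(2*pi)) * indicator {0..t} z \<le> ennreal (std_normal_density z) * indicator {0<..t} z"
        using AE_lborel_singleton[of 0]
      proof eventually_elim
        case (elim z)
        have "1 - z\<^sup>2/2 \<le> exp (-z\<^sup>2/2)" using exp_ge_add_one_self[of "-z\<^sup>2/2"] by simp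
        then have "(1 - z\<^sup>2/2)/sqrt(2*pi) \<le> std_normal_density z"
          by (simp add: std_normal_density_def divide_right_mono)
        then show ?case using elim by (auto simp: indicator_def intro: ennreal_leI)
      qed
    qed
    finally show ?thesis .
  qed
  have fin: "Qn t \<le> ennreal (1/2)" using Qn_mono[of 0 t] t Qn0 by simp
  have "Qn t \<noteq> top"
  proof
    assume "Qn t = top"
    with fin have "top \<le> ennreal (1/2)" by simp
    then show False by (simp add: top_unique)
  qed
  then obtain q where q: "Qn t = ennreal q" "0 \<le> q" by (cases "Qn t") auto
  define G where "G = (t - t^3/6)/sqrt(2*pi)"
  have G0: "0 \<le> G"
  proof -
    have "t^3 = t * t\<^sup>2" by (simp add: power2_eq_square power3_eq_cube)
    also have "\<dots> \<le> t * 2" using t by (intro mult_left_mono) auto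
    finally show ?thesis using t by (simp add: G_def)
  qed
  have "ennreal (q + G) = Qn t + ennreal G" using q G0 by (simp add: ennreal_plus)
  also have "\<dots> \<le> Qn t + ?I" using ge unfolding G_def by (rule add_left_mono)
  also have "\<dots> = ennreal (1/2)" using split Qn0 by simp
  finally have "ennreal (q + G) \<le> ennreal (1/2)" .
  then have "q + G \<le> 1/2" by (rule ennreal_le_iff[THEN iffD1, rotated]) simp
  then have "q \<le> 1/2 - G" by linarith
  moreover have "enn2real (Qn t) = q" using q by simp
  ultimately show ?thesis unfolding G_def by linarith
qed



lemma bvn_density_measurable[measurable]: "(\<lambda>p. bvn_density sx sy r p) \<in> borel_measurable borel"
  unfolding borel_prod[symmetric] bvn_density_def Let_def by measurable

lemma normal_density_meas_raw[measurable (raw)]: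
  assumes [measurable]: "f \<in> borel_measurable M" "g \<in> borel_measurable M"
  shows "(\<lambda>x. normal_density (f x) s (g x)) \<in> borel_measurable M"
  unfolding normal_density_def by measurable

lemma bvn_factor:
  assumes sx: "0 < sx" and sy: "0 < sy" and r: "-1 < r" "r < 1"
  shows "bvn_density sx sy r (x, y) = normal_density 0 sx x * normal_density (r * sy / sx * x) (sy * sqrt(1-r\<^sup>2)) y"
proof -
  have r2: "0 < 1 - r\<^sup>2" using r by (simp add: abs_square_less_1)
  have sq: "sqrt (1-r\<^sup>2) * sqrt (1-r\<^sup>2) = 1 - r\<^sup>2" using r2 by simp
  have e: "- (x\<^sup>2 / sx\<^sup>2 - 2 * r * x * y / (sx * sy) + y\<^sup>2 / sy\<^sup>2) / (2 * (1 - r\<^sup>2))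
     = -(x - 0)\<^sup>2 / (2 * sx\<^sup>2) + -(y - r * sy / sx * x)\<^sup>2 / (2 * (sy * sqrt(1-r\<^sup>2))\<^sup>2)"
    using sx sy r2 sq by (simp add: field_simps power2_eq_square)
  have q: "sqrt (2 * pi * sx\<^sup>2) * sqrt (2 * pi * (sy * sqrt(1-r\<^sup>2))\<^sup>2) = 2 * pi * sx * sy * sqrt (1 - r\<^sup>2)"
  proof -
    have "sqrt (2 * pi * sx\<^sup>2) * sqrt (2 * pi * (sy * sqrt(1-r\<^sup>2))\<^sup>2) = (sqrt (2 * pi) * sqrt (2 * pi)) * (sx * sy * sqrt(1-r\<^sup>2))"
      using sx sy r2 by (simp add: real_sqrt_mult ac_simps)
    also have "\<dots> = 2 * pi * sx * sy * sqrt (1 - r\<^sup>2)" by simp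
    finally show ?thesis .
  qed
  show ?thesis
    unfolding bvn_density_def Let_def fst_conv snd_conv e
    unfolding exp_add normal_density_def q[symmetric] by simp
qed

lemma normal_affine_eq:
  assumes "a \<noteq> 0" "0 < s"
  shows "\<bar>a\<bar> * normal_density (b + a * m) (\<bar>a\<bar> * s) (z * a + b) = normal_density m s z"
  using assms by (simp add: normal_density_def real_sqrt_mult field_simps) (simp add: power2_eq_square field_simps)

lemma bvn_linear:
  assumes sx: "0 < sx" and sy: "0 < sy" and r: "-1 < r" "r < 1"
    and w: "w1 \<noteq> 0 \<or> w2 \<noteq> 0" and B[measurable]: "B \<in> sets borel"
  shows "emeasure (bvn_measure sx sy r) {p. w1 * fst p + w2 * snd p \<in> B}
    = (\<integral>\<^sup>+l. ennreal (normal_density 0 (sqrt (w1\<^sup>2 * sx\<^sup>2 + 2 * r * w1 * w2 * sx * sy + w2\<^sup>2 * sy\<^sup>2)) l) * indicator B l \<partial>lborel)"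
proof -
  define m where "m = r * sy / sx"
  define \<tau> where "\<tau> = sy * sqrt (1 - r\<^sup>2)"
  have r2: "0 < 1 - r\<^sup>2" using r by (simp add: abs_square_less_1)
  have \<tau>: "0 < \<tau>" using sy r2 by (simp add: \<tau>_def)
  define F where "F x = (\<integral>\<^sup>+y. ennreal (normal_density (m * x) \<tau> y) * indicator B (w1 * x + w2 * y) \<partial>lborel)" for x
  have lin: "(\<lambda>p::real\<times>real. w1 * fst p + w2 * snd p) \<in> borel_measurable borel"
    by (intro borel_measurable_continuous_onI continuous_intros)
  have A[measurable]: "{p::real\<times>real. w1 * fst p + w2 * snd p \<in> B} \<in> sets borel"
    using measurable_sets_borel[OF lin B] by (simp add: vimage_def)
  have "emeasure (bvn_measure sx sy r) {p. w1 * fst p + w2 * snd p \<in> B}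
      = (\<integral>\<^sup>+p. ennreal (bvn_density sx sy r p) * indicator {p. w1 * fst p + w2 * snd p \<in> B} p \<partial>lborel)"
    unfolding bvn_measure_def by (subst emeasure_density) auto
  also have "\<dots> = (\<integral>\<^sup>+p. ennreal (bvn_density sx sy r p) * indicator {p. w1 * fst p + w2 * snd p \<in> B} p \<partial>(lborel \<Otimes>\<^sub>M lborel))"
    by (simp only: lborel_prod)
  also have "\<dots> = (\<integral>\<^sup>+x. \<integral>\<^sup>+y. ennreal (bvn_density sx sy r (x, y)) * indicator {p. w1 * fst p + w2 * snd p \<in> B} (x, y) \<partial>lborel \<partial>lborel)"
    by (rule lborel.nn_integral_fst[symmetric]) (simp add: lborel_prod)
  also have "\<dots> = (\<integral>\<^sup>+x. ennreal (normal_density 0 sx x) * F x \<partial>lborel)"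
  proof (rule nn_integral_cong)
    fix x :: real
    show "(\<integral>\<^sup>+y. ennreal (bvn_density sx sy r (x, y)) * indicator {p. w1 * fst p + w2 * snd p \<in> B} (x, y) \<partial>lborel)
      = ennreal (normal_density 0 sx x) * F x"
      unfolding F_def
      by (subst nn_integral_cmult[symmetric]) (auto simp: bvn_factor[OF sx sy r] m_def \<tau>_def ennreal_mult' indicator_def mult.assoc intro!: nn_integral_cong)
  qed
  finally have L: "emeasure (bvn_measure sx sy r) {p. w1 * fst p + w2 * snd p \<in> B} = (\<integral>\<^sup>+x. ennreal (normal_density 0 sx x) * F x \<partial>lborel)" .
  define v where "v = w1\<^sup>2 * sx\<^sup>2 + 2 * r * w1 * w2 * sx * sy + w2\<^sup>2 * sy\<^sup>2"
  define \<alpha> where "\<alpha> = w1 + w2 * m"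
  have v_eq: "v = (\<alpha> * sx)\<^sup>2 + (w2 * \<tau>)\<^sup>2"
    using sx r2 unfolding v_def \<alpha>_def m_def \<tau>_def
    by (simp add: power2_eq_square field_simps)
  show ?thesis
  proof (cases "w2 = 0")
    case True
    then have w1: "w1 \<noteq> 0" using w by simp
    have F: "F x = indicator B (w1 * x)" for x
    proof -
      have one: "(\<integral>\<^sup>+y. ennreal (normal_density (m * x) \<tau> y) \<partial>lborel) = 1"
        using \<tau> by (subst nn_integral_eq_integral) auto
      show ?thesis unfolding F_def using True by (simp add: nn_integral_multc one)
    qed
    have "(\<integral>\<^sup>+x. ennreal (normal_density 0 sx x) * F x \<partial>lborel)
       = (\<integral>\<^sup>+x. ennreal (normal_density 0 sx x) * indicator B (w1 * x) \<partial>lborel)"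
      by (simp add: F)
    also have "\<dots> = \<bar>1/w1\<bar> * (\<integral>\<^sup>+l. ennreal (normal_density 0 sx (0 + 1/w1 * l)) * indicator B (w1 * (0 + 1/w1 * l)) \<partial>lborel)"
      using nn_integral_real_affine[of "\<lambda>x. ennreal (normal_density 0 sx x) * indicator B (w1 * x)" "1/w1" 0] w1 by simp
    also have "\<dots> = (\<integral>\<^sup>+l. ennreal (normal_density 0 (sqrt v) l) * indicator B l \<partial>lborel)"
    proof -
      have "\<bar>1/w1\<bar> * normal_density 0 sx (l / w1) = normal_density 0 (sqrt v) l" for l
      proof -
        have sv: "sqrt v = \<bar>w1\<bar> * sx" using True sx by (simp add: v_def real_sqrt_mult)
        have "\<bar>w1\<bar> * normal_density (0 + w1 * 0) (\<bar>w1\<bar> * sx) (l / w1 * w1 + 0) = normal_density 0 sx (l / w1)"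
          by (rule normal_affine_eq[OF w1 sx])
        then show ?thesis using w1 sv by (simp add: field_simps)
      qed
      then show ?thesis
        using w1 by (subst nn_integral_cmult[symmetric]) (auto intro!: nn_integral_cong simp: ennreal_mult'[symmetric] mult.assoc[symmetric])
    qed
    finally show ?thesis using L v_def by simp
  next
    case False
    define \<gamma> where "\<gamma> = \<bar>w2\<bar> * \<tau>"
    have \<gamma>: "0 < \<gamma>" using False \<tau> by (simp add: \<gamma>_def)
    have F: "F x = (\<integral>\<^sup>+l. ennreal (normal_density (\<alpha> * x) \<gamma> l) * indicator B l \<partial>lborel)" for x
    proof -
      have "(\<integral>\<^sup>+l. ennreal (normal_density (\<alpha> * x) \<gamma> l) * indicator B l \<partial>lborel)
        = \<bar>w2\<bar> * (\<integral>\<^sup>+y. ennreal (normal_density (\<alpha> * x) \<gamma> (w1 * x + w2 * y)) * indicator B (w1 * x + w2 * y) \<partial>lborel)"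
        using nn_integral_real_affine[of "\<lambda>l. ennreal (normal_density (\<alpha> * x) \<gamma> l) * indicator B l" w2 "w1 * x"] False by simp
      also have "\<dots> = F x"
      proof -
        have "\<bar>w2\<bar> * normal_density (\<alpha> * x) \<gamma> (w1 * x + w2 * y) = normal_density (m * x) \<tau> y" for y
        proof -
          have "\<bar>w2\<bar> * normal_density (w1 * x + w2 * (m * x)) (\<bar>w2\<bar> * \<tau>) (y * w2 + w1 * x) = normal_density (m * x) \<tau> y"
            by (rule normal_affine_eq[OF False \<tau>])
          then show ?thesis by (simp add: \<alpha>_def \<gamma>_def algebra_simps)
        qed
        then show ?thesis unfolding F_def
          by (subst nn_integral_cmult[symmetric]) (auto intro!: nn_integral_cong simp: ennreal_mult'[symmetric] mult.assoc[symmetric])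
      qed
      finally show ?thesis by simp
    qed
    have J: "(\<integral>\<^sup>+x. ennreal (normal_density 0 sx x) * ennreal (normal_density (\<alpha> * x) \<gamma> l) \<partial>lborel)
        = ennreal (normal_density 0 (sqrt v) l)" for l
    proof (cases "\<alpha> = 0")
      case True
      have sv: "sqrt v = \<gamma>" using True \<gamma> v_eq \<tau> by (simp add: \<gamma>_def power_mult_distrib real_sqrt_mult)
      have "(\<integral>\<^sup>+x. ennreal (normal_density 0 sx x) * ennreal (normal_density (\<alpha> * x) \<gamma> l) \<partial>lborel)
          = (\<integral>\<^sup>+x. ennreal (normal_density 0 sx x) \<partial>lborel) * ennreal (normal_density 0 \<gamma> l)"
        using True by (simp add: nn_integral_multc)
      also have "(\<integral>\<^sup>+x. ennreal (normal_density 0 sx x) \<partial>lborel) = 1"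
        using sx by (subst nn_integral_eq_integral) auto
      finally show ?thesis using sv by simp
    next
      case False
      have "(\<integral>\<^sup>+x. ennreal (normal_density 0 sx x) * ennreal (normal_density (\<alpha> * x) \<gamma> l) \<partial>lborel)
        = \<bar>1/\<alpha>\<bar> * (\<integral>\<^sup>+y. ennreal (normal_density 0 sx (0 + 1/\<alpha> * y)) * ennreal (normal_density (\<alpha> * (0 + 1/\<alpha> * y)) \<gamma> l) \<partial>lborel)"
      proof -
        have meas: "(\<lambda>x. ennreal (normal_density 0 sx x) * ennreal (normal_density (\<alpha> * x) \<gamma> l)) \<in> borel_measurable borel"
          unfolding normal_density_def by measurable
        show ?thesis
          using nn_integral_real_affine[OF meas, of "1/\<alpha>" 0] False by simp
      qed
      also have "\<dots> = (\<integral>\<^sup>+y. ennreal (normal_density 0 \<gamma> (l - y) * normal_density 0 (\<bar>\<alpha>\<bar> * sx) y) \<partial>lborel)"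
      proof -
        have "\<bar>1/\<alpha>\<bar> * (normal_density 0 sx (y / \<alpha>) * normal_density y \<gamma> l) = normal_density 0 \<gamma> (l - y) * normal_density 0 (\<bar>\<alpha>\<bar> * sx) y" for y
        proof -
          have "\<bar>\<alpha>\<bar> * normal_density (0 + \<alpha> * 0) (\<bar>\<alpha>\<bar> * sx) (y / \<alpha> * \<alpha> + 0) = normal_density 0 sx (y / \<alpha>)"
            by (rule normal_affine_eq[OF False sx])
          moreover have "normal_density y \<gamma> l = normal_density 0 \<gamma> (l - y)"
            by (simp add: normal_density_def power2_commute)
          ultimately show ?thesis using False by (simp add: field_simps)
        qed
        then show ?thesis
          using False by (subst nn_integral_cmult[symmetric]) (auto intro!: nn_integral_cong simp: ennreal_mult'[symmetric] mult.assoc[symmetric])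
      qed
      also have "\<dots> = ennreal (normal_density 0 (sqrt (\<gamma>\<^sup>2 + (\<bar>\<alpha>\<bar> * sx)\<^sup>2)) l)"
      proof -
        have pos: "0 < \<bar>\<alpha>\<bar> * sx" using False sx by simp
        show ?thesis using fun_cong[OF conv_normal_density_zero_mean[OF \<gamma> pos], of l] by simp
      qed
      also have "\<gamma>\<^sup>2 + (\<bar>\<alpha>\<bar> * sx)\<^sup>2 = v"
        using v_eq by (simp add: \<gamma>_def power_mult_distrib)
      finally show ?thesis .
    qed
    have "(\<integral>\<^sup>+x. ennreal (normal_density 0 sx x) * F x \<partial>lborel)
        = (\<integral>\<^sup>+x. \<integral>\<^sup>+l. ennreal (normal_density 0 sx x) * ennreal (normal_density (\<alpha> * x) \<gamma> l) * indicator B l \<partial>lborel \<partial>lborel)"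
      unfolding F by (intro nn_integral_cong) (simp add: nn_integral_cmult[symmetric] mult.assoc)
    also have "\<dots> = (\<integral>\<^sup>+l. \<integral>\<^sup>+x. ennreal (normal_density 0 sx x) * ennreal (normal_density (\<alpha> * x) \<gamma> l) * indicator B l \<partial>lborel \<partial>lborel)"
    proof -
      have meas: "(\<lambda>(x,l). ennreal (normal_density 0 sx x) * ennreal (normal_density (\<alpha> * x) \<gamma> l) * indicator B l) \<in> borel_measurable (lborel \<Otimes>\<^sub>M lborel)"
        by measurable
      show ?thesis using lborel_pair.Fubini[OF meas] by simp
    qed
    also have "\<dots> = (\<integral>\<^sup>+l. ennreal (normal_density 0 (sqrt v) l) * indicator B l \<partial>lborel)"
      by (intro nn_integral_cong) (simp add: nn_integral_multc J)
    finally show ?thesis using L v_def by simp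
  qed
qed



lemma U_bound_small:
  fixes e U :: real
  assumes e: "0 < e" and U: "0 < U" and quad: "U * U = 4 * e * U + 4 * (e + 1) * (e + 1)"
  shows "U * (1 + e) \<le> (2 + 4 * e) * (1 + e) + e * e"
proof (rule ccontr)
  assume "\<not> ?thesis"
  then have gt: "U * (1 + e) > (2 + 4 * e) * (1 + e) + e * e" by simp
  define k where "k = 1 + e"
  have k: "0 < k" using e by (simp add: k_def)
  define Bk where "Bk = (2 + 4 * e) * k + e * e"
  have gt': "U * k > Bk" using gt by (simp add: k_def Bk_def)
  have Bk_ge: "Bk \<ge> 2 * e * k" using e k by (simp add: Bk_def algebra_simps)
  have gB: "Bk * Bk - 4 * e * k * Bk - 4 * k * k * k * k = e * e * e * e"
    by (simp add: Bk_def k_def algebra_simps power2_eq_square)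
  have gU: "(U * k) * (U * k) - 4 * e * k * (U * k) - 4 * k * k * k * k = 0"
  proof -
    have "(U * k) * (U * k) - 4 * e * k * (U * k) - 4 * k * k * k * k = k * k * (U * U - 4 * e * U - 4 * k * k)"
      by (simp add: algebra_simps)
    also have "U * U - 4 * e * U - 4 * k * k = 0" using quad by (simp add: k_def algebra_simps)
    finally show ?thesis by simp
  qed
  have "(U * k - Bk) * (U * k + Bk - 4 * e * k) > 0"
    using gt' Bk_ge k e by (intro mult_pos_pos) auto
  moreover have "(U * k - Bk) * (U * k + Bk - 4 * e * k) = - (e * e * e * e)"
    using gB gU by (simp add: algebra_simps)
  moreover have "0 \<le> e * e * e * e" using e by simp
  ultimately show False by linarith
qed

lemma final_small:
  fixes e U :: real
  assumes e: "0 < e" "e \<le> 11/10" and U: "0 < U" and quad: "U * U = 4 * e * U + 4 * (e + 1) * (e + 1)"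
  shows "(1/2 - e/2 + pi * e^3/24) * (2 + U) < 2"
proof -
  define P where "P = 1/2 - e/2 + pi * e^3/24"
  show ?thesis
  proof (cases "P \<le> 0")
    case True
    then show ?thesis using U unfolding P_def[symmetric]
      by (smt (verit) mult_nonpos_nonneg)
  next
    case False
    have UB: "U * (1 + e) \<le> (2 + 4 * e) * (1 + e) + e * e" using U_bound_small[OF e(1) U quad] .
    have "(2 + U) * (1 + e) \<le> 4 * (1+e) * (1+e) + e * e" using UB by (simp add: algebra_simps)
    then have "P * ((2 + U) * (1 + e)) \<le> P * (4 * (1+e) * (1+e) + e * e)"
      using False by (intro mult_left_mono) auto
    also have "\<dots> < 2 * (1 + e)"
    proof -
      have pi: "pi \<le> 3.1416" using pi_approx by simp
      have e3: "e^3 = e * e * e" by (simp add: power3_eq_cube)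
      have "P * (4 * (1+e) * (1+e) + e * e) = 2 * (1 + e) - (3/2 * e * e + 5/2 * e * e * e) + pi/24 * e * e * e * (4 + 8 * e + 5 * e * e)"
        unfolding P_def e3 by (simp add: algebra_simps)
      also have "pi/24 * e * e * e * (4 + 8 * e + 5 * e * e) < 3/2 * e * e + 5/2 * e * e * e"
      proof -
        have "4 + 8 * e + 5 * e * e \<le> 4 + 8 * (11/10) + 5 * (11/10) * (11/10)"
          using e by (intro add_mono mult_mono) auto
        then have h1: "4 + 8 * e + 5 * e * e \<le> 1885/100" by simp
        have h2: "pi/24 \<le> 3.1416/24" using pi by simp
        have "pi/24 * e * e * e * (4 + 8 * e + 5 * e * e) = (e * e) * (e * (pi/24 * (4 + 8 * e + 5 * e * e)))"
          by (simp add: algebra_simps)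
        also have "\<dots> \<le> (e * e) * (e * (3.1416/24 * (1885/100)))"
          using e h1 h2 by (intro mult_left_mono mult_mono) auto
        also have "\<dots> < (e * e) * (3/2 + 5/2 * e)"
          using e by (intro mult_strict_left_mono) auto
        finally show ?thesis by (simp add: algebra_simps)
      qed
      finally show ?thesis by simp
    qed
    finally have lt: "P * (2 + U) * (1 + e) < 2 * (1 + e)" by (simp add: mult.assoc)
    have pos: "0 < 1 + e" using e by simp
    have "P * (2 + U) < 2" using lt mult_less_cancel_right_pos[OF pos, of "P * (2 + U)" 2] by blast
    then show ?thesis unfolding P_def .
  qed
qed

lemma final_large:
  fixes e U :: real
  assumes e: "11/10 \<le> e" and U: "0 < U" and quad: "U * U = 4 * e * U + 4 * (e + 1) * (e + 1)"
  shows "exp (- (pi * e\<^sup>2 / 4)) / 2 * (2 + U) < 2"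
proof -
  have U5: "U \<le> 5 * e + 2"
  proof (rule ccontr)
    assume "\<not> ?thesis"
    then have gt: "U > 5 * e + 2" by simp
    have "(U - (5 * e + 2)) * (U + (5 * e + 2) - 4 * e) > 0"
      using gt e by (intro mult_pos_pos) auto
    moreover have "(U - (5 * e + 2)) * (U + (5 * e + 2) - 4 * e) = - (e * e + 4 * e)"
      using quad by (simp add: algebra_simps)
    moreover have "0 \<le> e * e + 4 * e" using e by simp
    ultimately show False by linarith
  qed
  define y where "y = pi * e\<^sup>2 / 4"
  have y: "y \<ge> 314/400 * (e * e)"
  proof -
    have "314/100 * (e * e) \<le> pi * (e * e)" using pi_approx by (intro mult_right_mono) auto
    then show ?thesis by (simp add: y_def power2_eq_square)
  qed
  have y0: "0 \<le> y" by (simp add: y_def)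
  have ey: "1 + y + y\<^sup>2/2 \<le> exp y" using exp_lower_Taylor_quadratic[OF y0] .
  have ee: "e * e \<ge> 11/10 * e" using e by (intro mult_right_mono) auto
  have ylin: "y \<ge> 8635/10000 * e" using y ee by linarith
  have "y\<^sup>2 \<ge> (8635/10000 * e)\<^sup>2" using ylin e by (intro power_mono) auto
  also have "(8635/10000 * e)\<^sup>2 = (8635/10000)\<^sup>2 * (e * e)" by (simp add: power2_eq_square)
  also have "\<dots> \<ge> (8635/10000)\<^sup>2 * (11/10 * e)" using ee by (intro mult_left_mono) auto
  finally have ysq: "y\<^sup>2 \<ge> (8635/10000)\<^sup>2 * (11/10 * e)" .
  have "exp y > (2 + U) / 4"
  proof -
    have "(2 + U) / 4 \<le> 1 + 5/4 * e" using U5 by simp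
    also have "\<dots> < 1 + y + y\<^sup>2 / 2" using ylin ysq e by (simp add: power2_eq_square)
    finally show ?thesis using ey by simp
  qed
  then have "exp (-y) * (2 + U) < 4"
    by (simp add: exp_minus field_simps)
  then show ?thesis unfolding y_def by simp
qed



lemma geo:
  fixes X x1 y1 :: real
  assumes X: "0 < X" and u: "x1 + y1 < -2*X"
  defines "u \<equiv> -(x1+y1)"
  defines "E \<equiv> sqrt(u\<^sup>2/2 + u*X) - u/2 - X"
  defines "M \<equiv> u/2 + X + \<bar>x1-y1\<bar>/2"
  shows "0 < E" "2*E*M \<le> (x1\<^sup>2+y1\<^sup>2-2*X\<^sup>2)/2" "\<bar>x1 - X\<bar> \<le> M" "\<bar>y1 - X\<bar> \<le> M"
    "(E + u/2 + X)\<^sup>2 = u\<^sup>2/2 + u*X"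
proof -
  define R where "R = sqrt(u\<^sup>2/2 + u*X)"
  define h where "h = u/2 + X"
  have u2: "u > 2*X" using u by (simp add: u_def)
  have up: "0 < u" using u2 X by simp
  have nn: "0 \<le> u\<^sup>2/2 + u*X" using up X by (intro add_nonneg_nonneg) auto
  have R2: "R * R = u\<^sup>2/2 + u*X" unfolding R_def by (metis nn real_sqrt_mult_self abs_of_nonneg)
  have R0: "0 \<le> R" using nn by (simp add: R_def)
  have hE: "E = R - h" by (simp add: E_def R_def h_def)
  have "h * h < R * R"
  proof -
    have "R * R - h * h = u * u / 4 - X * X" using R2 by (simp add: h_def power2_eq_square algebra_simps)
    moreover have "X * X < (u/2) * (u/2)" using X u2 by (intro mult_strict_mono) auto
    ultimately show ?thesis by simp
  qed
  then have "h < R" using R0 by (metis abs_of_nonneg mult_less_cancel_left_pos not_less order.strict_trans2 abs_le_square_iff less_eq_real_def zero_le_mult_iff power2_eq_square)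
  then show E0: "0 < E" using hE by simp
  have ER: "E + u/2 + X = R" using hE by (simp add: h_def)
  show "(E + u/2 + X)\<^sup>2 = u\<^sup>2/2 + u*X" unfolding ER using R2 by (simp add: power2_eq_square)
  define q where "q = (x1 - y1)/2"
  have x1: "x1 = -u/2 + q" and y1: "y1 = -u/2 - q" by (simp_all add: q_def u_def field_simps)
  have Mq: "M = h + \<bar>q\<bar>" by (simp add: M_def h_def q_def)
  have "E * E + 2 * E * h = R * R - h * h" unfolding hE by (simp add: algebra_simps)
  also have "\<dots> = u * u / 4 - X * X" using R2 by (simp add: h_def power2_eq_square field_simps)
  finally have key: "E * E + 2 * E * h = u * u / 4 - X * X" .
  have "(x1\<^sup>2+y1\<^sup>2-2*X\<^sup>2)/2 - 2*E*M = (\<bar>q\<bar> - E)\<^sup>2"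
    unfolding Mq x1 y1 using key
    by (simp add: power2_eq_square algebra_simps)
  then show "2*E*M \<le> (x1\<^sup>2+y1\<^sup>2-2*X\<^sup>2)/2" by (smt (verit) zero_le_power2)
  show "\<bar>x1 - X\<bar> \<le> M" unfolding Mq x1 h_def using up X by (auto simp: abs_if)
  show "\<bar>y1 - X\<bar> \<le> M" unfolding Mq y1 h_def using up X by (auto simp: abs_if)
qed

lemma normal_scale_eq: "0 < \<sigma> \<Longrightarrow> \<sigma> * normal_density 0 \<sigma> (\<sigma> * z) = std_normal_density z"
  using normal_affine_eq[of \<sigma> 1 0 0 z] by (simp add: mult.commute)

lemma Qn_scale:
  assumes s: "0 < \<sigma>"
  shows "(\<integral>\<^sup>+l. ennreal (normal_density 0 \<sigma> l) * indicator {c<..} l \<partial>lborel) = Qn (c/\<sigma>)"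
proof -
  have "(\<integral>\<^sup>+l. ennreal (normal_density 0 \<sigma> l) * indicator {c<..} l \<partial>lborel)
    = \<bar>\<sigma>\<bar> * (\<integral>\<^sup>+z. ennreal (normal_density 0 \<sigma> (0 + \<sigma> * z)) * indicator {c<..} (0 + \<sigma> * z) \<partial>lborel)"
    using nn_integral_real_affine[of "\<lambda>l. ennreal (normal_density 0 \<sigma> l) * indicator {c<..} l" \<sigma> 0] s by simp
  also have "\<dots> = Qn (c/\<sigma>)"
    unfolding Qn_def using s
    by (subst nn_integral_cmult[symmetric])
       (auto intro!: nn_integral_cong simp: ennreal_mult'[symmetric] mult.assoc[symmetric] normal_scale_eq indicator_def pos_divide_less_eq mult.commute[of _ \<sigma>])
  finally show ?thesis .
qed

lemma Ln_scale:
  assumes s: "0 < \<sigma>"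
  shows "(\<integral>\<^sup>+l. ennreal (normal_density 0 \<sigma> l) * indicator {..<c} l \<partial>lborel)
     = (\<integral>\<^sup>+z. ennreal (std_normal_density z) * indicator {..<c/\<sigma>} z \<partial>lborel)"
proof -
  have "(\<integral>\<^sup>+l. ennreal (normal_density 0 \<sigma> l) * indicator {..<c} l \<partial>lborel)
    = \<bar>\<sigma>\<bar> * (\<integral>\<^sup>+z. ennreal (normal_density 0 \<sigma> (0 + \<sigma> * z)) * indicator {..<c} (0 + \<sigma> * z) \<partial>lborel)"
    using nn_integral_real_affine[of "\<lambda>l. ennreal (normal_density 0 \<sigma> l) * indicator {..<c} l" \<sigma> 0] s by simp
  also have "\<dots> = (\<integral>\<^sup>+z. ennreal (std_normal_density z) * indicator {..<c/\<sigma>} z \<partial>lborel)"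
    using s
    by (subst nn_integral_cmult[symmetric])
       (auto intro!: nn_integral_cong simp: ennreal_mult'[symmetric] mult.assoc[symmetric] normal_scale_eq indicator_def pos_less_divide_eq mult.commute[of _ \<sigma>])
  finally show ?thesis .
qed

lemma ennreal_sum1:
  assumes "a + b = (1::ennreal)"
  shows "enn2real a + enn2real b = 1"
proof -
  have "a \<noteq> top" "b \<noteq> top" using assms by (auto simp: top_add)
  then obtain x y where a: "a = ennreal x" "0 \<le> x" and b: "b = ennreal y" "0 \<le> y"
    by (metis ennreal_cases)
  then have "ennreal (x + y) = ennreal 1" using assms by (simp add: ennreal_plus[symmetric] del: ennreal_plus)
  then have "x + y = 1" using a b by (subst (asm) ennreal_inj) auto
  then show ?thesis using a b by simp
qed

lemma Qn_le1: "Qn t \<le> 1"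
  using Qn_split[of t] by (metis le_iff_add)

lemma enn2real_Qn_le: "Qn t \<le> ennreal b \<Longrightarrow> 0 \<le> b \<Longrightarrow> enn2real (Qn t) \<le> b"
  using enn2real_mono[of "Qn t" "ennreal b"] by simp



lemma iff_aux: assumes "(B::real) - A = 2 * (L - c)" shows "(A < B) = (c < L)"
proof -
  have "B = A + 2 * L - 2 * c" using assms by (simp add: algebra_simps)
  then show ?thesis by auto
qed

lemma iff_aux2: assumes "(B::real) - A = 2 * (L - c)" shows "(A > B) = (L < c)"
proof -
  have "B = A + 2 * L - 2 * c" using assms by (simp add: algebra_simps)
  then show ?thesis by auto
qed

theorem mainTheorem15:
  fixes sx sy r x1 y1 :: real
  assumes "0 < sx" and "sx < sy" and "0 < r" and "r < 1"
    and "x1^2 + y1^2 > 2 * (x2star sx sy r)^2"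
  shows "payoffK sx sy r (x1, y1) (x2star sx sy r, x2star sx sy r) > 0"
proof -
  note sx = assms(1)
  have sy: "0 < sy" using assms(1,2) by simp
  have r: "-1 < r" "r < 1" using assms(3,4) by auto
  define X where "X = x2star sx sy r"
  define S where "S = sx\<^sup>2 + 2 * r * sx * sy + sy\<^sup>2"
  have rss: "0 < r * sx * sy" using assms(3) sx sy by simp
  have S: "0 < S" unfolding S_def using sx sy rss by (simp add: add_pos_pos)
  have Xd: "X = sqrt (2 * pi * S) / 4" unfolding X_def x2star_def S_def by simp
  have Xp: "0 < X" using S by (simp add: Xd)
  define sp where "sp = sqrt (2 * pi)"
  have sp: "0 < sp" "sp * sp = 2 * pi" by (simp_all add: sp_def)
  have sqS: "sqrt S = 4 * X / sp"
    using sp S by (simp add: Xd sp_def real_sqrt_mult field_simps)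
  have far: "x1\<^sup>2 + y1\<^sup>2 > 2 * X\<^sup>2" using assms(5) by (simp add: X_def)
  define w1 where "w1 = x1 - X"
  define w2 where "w2 = y1 - X"
  define c where "c = (x1\<^sup>2 + y1\<^sup>2 - 2 * X\<^sup>2) / 2"
  define v where "v = w1\<^sup>2 * sx\<^sup>2 + 2 * r * w1 * w2 * sx * sy + w2\<^sup>2 * sy\<^sup>2"
  have ab: "(x1, y1) \<noteq> (X, X)" using far by (auto simp: power2_eq_square)
  have w: "w1 \<noteq> 0 \<or> w2 \<noteq> 0" using ab by (auto simp: w1_def w2_def)
  have cpos: "0 < c" using far by (simp add: c_def)
  have vpos: "0 < v"
  proof -
    have r2: "0 < 1 - r\<^sup>2" using r by (simp add: abs_square_less_1)
    have veq: "v = (w1 * sx + r * w2 * sy)\<^sup>2 + (1 - r\<^sup>2) * (w2 * sy)\<^sup>2"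
      by (simp add: v_def power2_eq_square algebra_simps)
    show ?thesis
    proof (cases "w2 = 0")
      case True
      then have "w1 \<noteq> 0" using w by simp
      then show ?thesis using True sx by (simp add: v_def)
    next
      case False
      then have "0 < (1 - r\<^sup>2) * (w2 * sy)\<^sup>2" using r2 sy by simp
      then show ?thesis unfolding veq by (smt (verit) zero_le_power2)
    qed
  qed
  define t where "t = c / sqrt v"
  have tpos: "0 < t" using cpos vpos by (simp add: t_def)
  have iden: "(X - x)\<^sup>2 + (X - y)\<^sup>2 - ((x1 - x)\<^sup>2 + (y1 - y)\<^sup>2) = 2 * (w1 * x + w2 * y - c)" for x y
    by (simp add: c_def w1_def w2_def power2_eq_square algebra_simps add_divide_distrib diff_divide_distrib)
  have C1eq: "C1 (x1, y1) (X, X) = {p. w1 * fst p + w2 * snd p \<in> {c<..}}"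
  proof -
    have "(x1 - x)\<^sup>2 + (y1 - y)\<^sup>2 < (X - x)\<^sup>2 + (X - y)\<^sup>2 \<longleftrightarrow> c < w1 * x + w2 * y" for x y
      by (rule iff_aux[OF iden[of x y]])
    then show ?thesis by (auto simp: C1_def)
  qed
  have C2eq: "C2 (x1, y1) (X, X) = {p. w1 * fst p + w2 * snd p \<in> {..<c}}"
  proof -
    have "(x1 - x)\<^sup>2 + (y1 - y)\<^sup>2 > (X - x)\<^sup>2 + (X - y)\<^sup>2 \<longleftrightarrow> w1 * x + w2 * y < c" for x y
      by (rule iff_aux2[OF iden[of x y]])
    then show ?thesis by (auto simp: C2_def)
  qed
  define Ln where "Ln = (\<integral>\<^sup>+z. ennreal (std_normal_density z) * indicator {..<t} z \<partial>lborel)"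
  have P1: "bvn_prob sx sy r (C1 (x1, y1) (X, X)) = enn2real (Qn t)"
    unfolding bvn_prob_def measure_def C1eq
    using bvn_linear[OF sx sy r w, of "{c<..}"] Qn_scale[of "sqrt v" c] vpos
    unfolding v_def[symmetric] t_def by simp
  have P2: "bvn_prob sx sy r (C2 (x1, y1) (X, X)) = enn2real Ln"
    unfolding bvn_prob_def measure_def C2eq
    using bvn_linear[OF sx sy r w, of "{..<c}"] Ln_scale[of "sqrt v" c] vpos
    unfolding v_def[symmetric] t_def Ln_def by simp
  define q where "q = enn2real (Qn t)"
  have ql: "q + enn2real Ln = 1" unfolding q_def Ln_def by (rule ennreal_sum1[OF Qn_split])
  have K: "payoffK sx sy r (x1, y1) (X, X) = (x1 + y1) * q + 2 * X * (1 - q)"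
  proof -
    have ql': "enn2real Ln = 1 - q" using ql by simp
    show ?thesis unfolding payoffK_def using ab P1 P2 ql' by (auto simp: q_def)
  qed
  have q0: "0 \<le> q" by (simp add: q_def)
  have qch: "q \<le> exp (-t\<^sup>2/2) / 2"
    unfolding q_def using Qn_chernoff[of t] tpos by (intro enn2real_Qn_le) auto
  have qhalf: "q < 1/2"
  proof -
    have e1: "exp (-t\<^sup>2/2) < 1" using tpos by simp
    show ?thesis using qch e1 by linarith
  qed
  show ?thesis
    unfolding X_def[symmetric] K
  proof (cases "-2 * X \<le> x1 + y1")
    case True
    show "0 < (x1 + y1) * q + 2 * X * (1 - q)"
    proof (cases "2 * X - (x1 + y1) \<le> 0")
      case True
      have "(x1 + y1) * q + 2 * X * (1 - q) = 2 * X - (2 * X - (x1 + y1)) * q" by (simp add: algebra_simps)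
      moreover have "(2 * X - (x1 + y1)) * q \<le> 0" using True q0 by (simp add: mult_nonpos_nonneg)
      ultimately show ?thesis using Xp by simp
    next
      case False
      have "(2 * X - (x1 + y1)) * q < (2 * X - (x1 + y1)) * (1/2)"
        using False qhalf by (intro mult_strict_left_mono) auto
      moreover have "(x1 + y1) * q + 2 * X * (1 - q) = 2 * X - (2 * X - (x1 + y1)) * q" by (simp add: algebra_simps)
      ultimately show ?thesis using \<open>-2 * X \<le> x1 + y1\<close> by simp
    qed
  next
    case False
    then have uX: "x1 + y1 < -2 * X" by simp
    define u where "u = -(x1 + y1)"
    define E where "E = sqrt(u\<^sup>2/2 + u*X) - u/2 - X"
    define M where "M = u/2 + X + \<bar>x1-y1\<bar>/2"
    have Epos: "0 < E" and cM: "2*E*M \<le> c" and w1M: "\<bar>w1\<bar> \<le> M" and w2M: "\<bar>w2\<bar> \<le> M"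
      and rel: "(E + u/2 + X)\<^sup>2 = u\<^sup>2/2 + u*X"
      using geo[OF Xp uX] unfolding u_def[symmetric] E_def[symmetric] M_def[symmetric] c_def w1_def w2_def
      by auto
    have upos: "0 < u" using uX Xp by (simp add: u_def)
    have Mpos: "0 < M" using upos Xp by (simp add: M_def add_pos_nonneg)
    have vle: "v \<le> S * M\<^sup>2"
    proof -
      have a: "w1\<^sup>2 \<le> M\<^sup>2" using power_mono[OF w1M, of 2] by simp
      have b: "w2\<^sup>2 \<le> M\<^sup>2" using power_mono[OF w2M, of 2] by simp
      have "w1 * w2 \<le> \<bar>w1\<bar> * \<bar>w2\<bar>" by (simp add: abs_mult[symmetric])
      also have "\<dots> \<le> M * M" using w1M w2M by (intro mult_mono) auto
      finally have cc: "w1 * w2 \<le> M\<^sup>2" by (simp add: power2_eq_square)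
      have "v = sx\<^sup>2 * w1\<^sup>2 + (2 * (r * sx * sy)) * (w1 * w2) + sy\<^sup>2 * w2\<^sup>2"
        by (simp add: v_def algebra_simps)
      also have "\<dots> \<le> sx\<^sup>2 * M\<^sup>2 + (2 * (r * sx * sy)) * M\<^sup>2 + sy\<^sup>2 * M\<^sup>2"
        using a b cc rss by (intro add_mono mult_left_mono) auto
      also have "\<dots> = S * M\<^sup>2" by (simp add: S_def algebra_simps)
      finally show ?thesis .
    qed
    have sv: "sqrt v \<le> sqrt S * M"
    proof -
      have "sqrt v \<le> sqrt (S * M\<^sup>2)" using vle by simp
      also have "\<dots> = sqrt S * M" using Mpos by (simp add: real_sqrt_mult)
      finally show ?thesis .
    qed
    define t1 where "t1 = 2 * E / sqrt S"
    have tt1: "t1 \<le> t"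
    proof -
      have "t1 = (2 * E * M) / (sqrt S * M)" using Mpos by (simp add: t1_def)
      also have "\<dots> \<le> c / (sqrt S * M)" using cM Mpos S by (intro divide_right_mono) auto
      also have "\<dots> \<le> c / sqrt v"
      proof -
        have "0 < sqrt S * M * sqrt v" using S Mpos vpos by simp
        then show ?thesis using cpos vpos sv by (intro divide_left_mono) auto
      qed
      finally show ?thesis by (simp add: t_def)
    qed
    have qt1: "q \<le> enn2real (Qn t1)"
    proof -
      have "Qn t1 < top" using le_less_trans[OF Qn_le1[of t1] ennreal_one_less_top] .
      then show ?thesis unfolding q_def using Qn_mono[OF tt1] by (intro enn2real_mono)
    qed
    define e where "e = E / X"
    define U where "U = u / X"
    have epos: "0 < e" using Epos Xp by (simp add: e_def)
    have Upos: "0 < U" using upos Xp by (simp add: U_def)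
    have Ee: "E = e * X" and uU: "u = U * X" using Xp by (simp_all add: e_def U_def)
    have quad: "U * U = 4 * e * U + 4 * (e + 1) * (e + 1)"
    proof -
      have "X\<^sup>2 * ((e + U/2 + 1)\<^sup>2) = X\<^sup>2 * (U\<^sup>2/2 + U)"
        using rel unfolding Ee uU by (simp add: power2_eq_square algebra_simps)
      then have "(e + U/2 + 1)\<^sup>2 = U\<^sup>2/2 + U" using Xp by simp
      then show ?thesis by (simp add: power2_eq_square algebra_simps)
    qed
    have t1e: "t1 = e * sp / 2"
      unfolding t1_def sqS Ee using Xp sp by (simp add: field_simps)
    have goal: "q * (2 + U) * X < 2 * X"
    proof (cases "e \<le> 11/10")
      case True
      have t1nn: "0 \<le> t1" using epos sp by (simp add: t1e)
      have t1sq: "t1\<^sup>2 \<le> 2"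
      proof -
        have "t1\<^sup>2 = e * e * (sp * sp) / 4" by (simp add: t1e power2_eq_square)
        also have "\<dots> = e * e * pi / 2" using sp by simp
        also have "\<dots> \<le> (11/10) * (11/10) * 3.1416 / 2"
          using True epos pi_approx by (intro divide_right_mono mult_mono) auto
        finally show ?thesis by simp
      qed
      have "enn2real (Qn t1) \<le> 1/2 - (t1 - t1^3/6)/sqrt(2*pi)" by (rule Qn_poly[OF t1nn t1sq])
      also have "(t1 - t1^3/6)/sqrt(2*pi) = e/2 - pi * e^3/24"
      proof -
        have pi: "pi = sp * sp / 2" using sp by simp
        show ?thesis unfolding sp_def[symmetric] t1e
          by (subst pi) (use sp in \<open>simp add: field_simps power3_eq_cube\<close>)
      qed
      finally have B: "q \<le> 1/2 - e/2 + pi * e^3/24" using qt1 by simp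
      have "q * (2 + U) \<le> (1/2 - e/2 + pi * e^3/24) * (2 + U)"
        using B Upos by (intro mult_right_mono) auto
      also have "\<dots> < 2" by (rule final_small[OF epos True Upos quad])
      finally show ?thesis using Xp by simp
    next
      case False
      have ch: "enn2real (Qn t1) \<le> exp (-t1\<^sup>2/2) / 2"
        using Qn_chernoff[of t1] epos sp by (intro enn2real_Qn_le) (auto simp: t1e)
      have eqt: "-t1\<^sup>2/2 = - (pi * e\<^sup>2 / 4)"
        using sp by (simp add: t1e power2_eq_square field_simps)
      have B: "q \<le> exp (- (pi * e\<^sup>2 / 4)) / 2" using qt1 ch unfolding eqt by linarith
      have "q * (2 + U) \<le> exp (- (pi * e\<^sup>2 / 4)) / 2 * (2 + U)"
        using B Upos by (intro mult_right_mono) auto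
      also have "\<dots> < 2" using final_large[of e U] False Upos quad by simp
      finally show ?thesis using Xp by simp
    qed
    have sU: "x1 + y1 = - (U * X)" using uU by (simp add: u_def)
    have "(x1 + y1) * q + 2 * X * (1 - q) = 2 * X - q * (2 + U) * X"
      unfolding sU by (simp add: algebra_simps)
    then show "0 < (x1 + y1) * q + 2 * X * (1 - q)" using goal by simp
  qed
qed


end
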